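(* Let $M$ be a finite monoid. Then the following are equivalent: (a) $M$ is a group; (b) $M$ is strongly sofic; (c) $M$ has no non-trivial idempotents (no $e\in M$ with $e^2=e\ne1_M$).
   Context: Hamming metric on $\operatorname{Map}(D)$ (monoid of maps $D\to D$, $D$ finite non-empty): $d_D^{\mathrm{Ham}}(f,g)=\frac{1}{|D|}|\{v:f(v)\ne g(v)\}|$. A monoid $M$ is strongly sofic if for every finite $K\subset M$ there is an integer $\Delta_K\ge1$ such that for every $\varepsilon>0$ there exist a non-empty finite set $D$ and a map $\sigma\colon M\to\operatorname{Map}(D)$ with (1) $\sigma(1_M)=\mathrm{Id}_D$; (2) $d_D^{\mathrm{Ham}}(\sigma(k_1k_2),\sigma(k_1)\sigma(k_2))\le\varepsilon$ for $k_1,k_2\in K$; (3) $d_D^{\mathrm{Ham}}(\sigma(k_1),\sigma(k_2))\ge1-\varepsilon$ for distinct $k_1,k_2\in K$; (4) $|\sigma(k)^{-1}(v)|\le\Delta_K$ for $k\in K$, $v\in D$. *)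

theory Defs
  imports Complex_Main "HOL-Algebra.Group"
begin

text \<open>Maps D \<Rightarrow> D on a finite non-empty set D, represented as functions on nat
  (D :: nat set); only values on D matter.\<close>

definition ham_dist :: "nat set \<Rightarrow> (nat \<Rightarrow> nat) \<Rightarrow> (nat \<Rightarrow> nat) \<Rightarrow> real" where
  "ham_dist D f g = real (card {v \<in> D. f v \<noteq> g v}) / real (card D)"

definition strongly_sofic :: "('a, 'b) monoid_scheme \<Rightarrow> bool" where
  "strongly_sofic M \<longleftrightarrow>
    (\<forall>K. K \<subseteq> carrier M \<and> finite K \<longrightarrow>
      (\<exists>\<Delta>::nat. \<Delta> \<ge> 1 \<and>
        (\<forall>\<epsilon>::real. \<epsilon> > 0 \<longrightarrow>
          (\<exists>(D::nat set) (\<sigma>::'a \<Rightarrow> nat \<Rightarrow> nat).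
             finite D \<and> D \<noteq> {} \<and>
             (\<forall>m \<in> carrier M. \<sigma> m ` D \<subseteq> D) \<and>
             (\<forall>v \<in> D. \<sigma> \<one>\<^bsub>M\<^esub> v = v) \<and>
             (\<forall>k1 \<in> K. \<forall>k2 \<in> K.
                ham_dist D (\<sigma> (k1 \<otimes>\<^bsub>M\<^esub> k2)) (\<sigma> k1 \<circ> \<sigma> k2) \<le> \<epsilon>) \<and>
             (\<forall>k1 \<in> K. \<forall>k2 \<in> K. k1 \<noteq> k2 \<longrightarrow>
                ham_dist D (\<sigma> k1) (\<sigma> k2) \<ge> 1 - \<epsilon>) \<and>
             (\<forall>k \<in> K. \<forall>v \<in> D. card {u \<in> D. \<sigma> k u = v} \<le> \<Delta>)))))"

end

theory Submission
  imports Defs begin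

lemma (in monoid) pow_repeat:
  assumes fin: "finite (carrier G)" and x: "x \<in> carrier G"
  shows "\<exists>i j. i < j \<and> x [^] i = x [^] (j::nat)"
proof -
  have "\<not> inj_on (\<lambda>n::nat. x [^] n) {0..card (carrier G)}"
  proof (rule pigeonhole)
    have "(\<lambda>n::nat. x [^] n) ` {0..card (carrier G)} \<subseteq> carrier G" using x by auto
    then have "card ((\<lambda>n::nat. x [^] n) ` {0..card (carrier G)}) \<le> card (carrier G)"
      using fin by (rule card_mono[rotated])
    then show "card ((\<lambda>n::nat. x [^] n) ` {0..card (carrier G)}) < card {0..card (carrier G)}" by simp
  qed
  then obtain a b where ab: "a \<noteq> b" "x [^] a = x [^] (b::nat)" unfolding inj_on_def by auto
  show ?thesis
  proof (cases "a < b")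
    case True then show ?thesis using ab by blast
  next
    case False then have "b < a" using ab by auto
    then show ?thesis using ab by metis
  qed
qed

lemma (in monoid) finite_no_idem_group:
  assumes fin: "finite (carrier G)"
    and noid: "\<not> (\<exists>e \<in> carrier G. e \<otimes> e = e \<and> e \<noteq> \<one>)"
  shows "group G"
proof (rule group_l_invI)
  fix x assume x: "x \<in> carrier G"
  obtain i j where ij: "i < j" "x [^] i = x [^] (j::nat)" using pow_repeat[OF fin x] by blast
  define p where "p = j - i"
  have p: "p \<ge> 1" "j = i + p" using ij unfolding p_def by auto
  have step: "x [^] (n + p) = x [^] n" if "n \<ge> i" for n
  proof -
    have "x [^] (n + p) = x [^] (n - i) \<otimes> x [^] (i + p)"
      using that by (simp add: nat_pow_mult x)
    also have "\<dots> = x [^] (n - i) \<otimes> x [^] i" using ij p by simp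
    also have "\<dots> = x [^] n" using that by (simp add: nat_pow_mult x)
    finally show ?thesis .
  qed
  have per: "x [^] (n + k * p) = x [^] n" if "n \<ge> i" for n k
  proof (induction k)
    case 0 then show ?case by simp
  next
    case (Suc k)
    have "x [^] (n + Suc k * p) = x [^] ((n + k * p) + p)" by (simp add: algebra_simps)
    also have "\<dots> = x [^] (n + k * p)" using step that by simp
    finally show ?case using Suc by simp
  qed
  define m where "m = (i + 1) * p"
  have "i * 1 \<le> i * p" using p by (intro mult_le_mono2) auto
  moreover have "m = p + i * p" unfolding m_def by simp
  ultimately have m: "m \<ge> i" "m \<ge> 1" using p by linarith+
  have "x [^] m \<otimes> x [^] m = x [^] m"
    using per[OF m(1), of "i+1"] by (simp add: nat_pow_mult x m_def)
  then have "x [^] m = \<one>" using noid x by auto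
  moreover have "x [^] (m - 1) \<otimes> x = x [^] m"
    using m by (metis Suc_diff_1 less_le_trans nat_pow_Suc x zero_less_one)
  ultimately show "\<exists>y\<in>carrier G. y \<otimes> x = \<one>" using x by (metis nat_pow_closed)
qed

lemma group_sofic:
  fixes M :: "('a, 'b) monoid_scheme" (structure)
  assumes G: "group M" and fin: "finite (carrier M)"
  shows "strongly_sofic M"
proof -
  interpret group M by (rule G)
  obtain enc where enc: "bij_betw enc (carrier M) {0..<card (carrier M)}"
    using ex_bij_betw_finite_nat[OF fin] by blast
  define dec where "dec = the_inv_into (carrier M) enc"
  define D where "D = {0..<card (carrier M)}"
  have inj: "inj_on enc (carrier M)" and img: "enc ` carrier M = D"
    using enc unfolding bij_betw_def D_def by auto
  have dec1: "dec v \<in> carrier M" "enc (dec v) = v" if "v \<in> D" for v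
    using that img inj unfolding dec_def
    by (auto intro: the_inv_into_into f_the_inv_into_f)
  have dec2: "dec (enc a) = a" "enc a \<in> D" if "a \<in> carrier M" for a
    using that img inj unfolding dec_def by (auto intro: the_inv_into_f_f)
  have Dne: "D \<noteq> {}" using img by auto
  have Dfin: "finite D" unfolding D_def by simp
  define \<sigma> where "\<sigma> = (\<lambda>m v. enc (m \<otimes> dec v))"
  show ?thesis unfolding strongly_sofic_def
  proof (intro allI impI exI[of _ "1::nat"] conjI)
    fix K and \<epsilon> :: real assume K: "K \<subseteq> carrier M \<and> finite K" and e: "\<epsilon> > 0"
    show "\<exists>(D::nat set) (\<sigma>::'a \<Rightarrow> nat \<Rightarrow> nat).
             finite D \<and> D \<noteq> {} \<and>
             (\<forall>m \<in> carrier M. \<sigma> m ` D \<subseteq> D) \<and>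
             (\<forall>v \<in> D. \<sigma> \<one>\<^bsub>M\<^esub> v = v) \<and>
             (\<forall>k1 \<in> K. \<forall>k2 \<in> K.
                ham_dist D (\<sigma> (k1 \<otimes>\<^bsub>M\<^esub> k2)) (\<sigma> k1 \<circ> \<sigma> k2) \<le> \<epsilon>) \<and>
             (\<forall>k1 \<in> K. \<forall>k2 \<in> K. k1 \<noteq> k2 \<longrightarrow>
                ham_dist D (\<sigma> k1) (\<sigma> k2) \<ge> 1 - \<epsilon>) \<and>
             (\<forall>k \<in> K. \<forall>v \<in> D. card {u \<in> D. \<sigma> k u = v} \<le> 1)"
    proof (intro exI[of _ D] exI[of _ \<sigma>] conjI ballI impI)
      show "finite D" "D \<noteq> {}" by (fact Dfin, fact Dne)
    next
      fix m assume "m \<in> carrier M"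
      then show "\<sigma> m ` D \<subseteq> D" unfolding \<sigma>_def using dec1 dec2 by auto
    next
      fix v assume "v \<in> D" then show "\<sigma> \<one> v = v" unfolding \<sigma>_def using dec1 by simp
    next
      fix k1 k2 assume k: "k1 \<in> K" "k2 \<in> K"
      then have kc: "k1 \<in> carrier M" "k2 \<in> carrier M" using K by auto
      have empt: "{v \<in> D. \<sigma> (k1 \<otimes> k2) v \<noteq> (\<sigma> k1 \<circ> \<sigma> k2) v} = {}"
        unfolding \<sigma>_def using kc dec1 dec2 by (auto simp: m_assoc)
      show "ham_dist D (\<sigma> (k1 \<otimes> k2)) (\<sigma> k1 \<circ> \<sigma> k2) \<le> \<epsilon>"
        unfolding ham_dist_def empt using e by simp
    next
      fix k1 k2 assume k: "k1 \<in> K" "k2 \<in> K" and ne: "k1 \<noteq> k2"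
      then have kc: "k1 \<in> carrier M" "k2 \<in> carrier M" using K by auto
      have "{v \<in> D. \<sigma> k1 v \<noteq> \<sigma> k2 v} = D"
      proof safe
        fix v assume v: "v \<in> D" "\<sigma> k1 v = \<sigma> k2 v"
        then have "k1 \<otimes> dec v = k2 \<otimes> dec v"
          unfolding \<sigma>_def using inj kc dec1 by (auto dest: inj_onD)
        then show False using ne kc dec1 v by simp
      qed
      then have "ham_dist D (\<sigma> k1) (\<sigma> k2) = 1" unfolding ham_dist_def using Dne Dfin by simp
      then show "ham_dist D (\<sigma> k1) (\<sigma> k2) \<ge> 1 - \<epsilon>" using e by simp
    next
      fix k v assume k: "k \<in> K" and v: "v \<in> D"
      then have kc: "k \<in> carrier M" using K by auto
      have "card {u \<in> D. \<sigma> k u = v} \<le> Suc 0"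
      proof -
        have fi: "finite {u \<in> D. \<sigma> k u = v}" using Dfin by simp
        have "\<forall>a\<in>{u \<in> D. \<sigma> k u = v}. \<forall>b\<in>{u \<in> D. \<sigma> k u = v}. a = b"
        proof (intro ballI)
          fix a b assume "a \<in> {u \<in> D. \<sigma> k u = v}" "b \<in> {u \<in> D. \<sigma> k u = v}"
          then have a: "a \<in> D" "\<sigma> k a = \<sigma> k b" "b \<in> D" by auto
          then have "k \<otimes> dec a = k \<otimes> dec b"
            unfolding \<sigma>_def using inj kc dec1 by (auto dest: inj_onD)
          then have "dec a = dec b" using kc dec1 a by simp
          then show "a = b" using dec1 a by metis
        qed
        then show ?thesis using card_le_Suc0_iff_eq[OF fi] by blast
      qed
      then show "card {u \<in> D. \<sigma> k u = v} \<le> 1" by simp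
    qed
  qed simp
qed


lemma fiber_bound:
  assumes "finite D" "A \<subseteq> D" "f ` A \<subseteq> D" "\<forall>w\<in>D. card {u \<in> D. f u = w} \<le> \<Delta>"
  shows "card A \<le> \<Delta> * card (f ` A)"
proof -
  have "A \<subseteq> (\<Union>w\<in>f ` A. {u \<in> D. f u = w})" using assms by auto
  then have "card A \<le> card (\<Union>w\<in>f ` A. {u \<in> D. f u = w})"
  proof (rule card_mono[rotated])
    show "finite (\<Union>w\<in>f ` A. {u \<in> D. f u = w})" by (rule finite_subset[OF _ assms(1)]) auto
  qed
  also have "\<dots> \<le> (\<Sum>w\<in>f ` A. card {u \<in> D. f u = w})" by (rule card_UN_le) (use assms finite_subset in blast)
  also have "\<dots> \<le> (\<Sum>w\<in>f ` A. \<Delta>)" using assms by (intro sum_mono) auto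
  also have "\<dots> = \<Delta> * card (f ` A)" by simp
  finally show ?thesis .
qed

lemma sofic_no_idem:
  fixes M :: "('a, 'b) monoid_scheme" (structure)
  assumes mon: "monoid M" and S: "strongly_sofic M"
  shows "\<not> (\<exists>e \<in> carrier M. e \<otimes> e = e \<and> e \<noteq> \<one>)"
proof
  assume "\<exists>e \<in> carrier M. e \<otimes> e = e \<and> e \<noteq> \<one>"
  then obtain e where e: "e \<in> carrier M" "e \<otimes> e = e" "e \<noteq> \<one>" by blast
  have one: "\<one> \<in> carrier M" using mon by (rule monoid.one_closed)
  have K: "{e, \<one>} \<subseteq> carrier M \<and> finite {e, \<one>}" using e(1) one by simp
  note S' = S[unfolded strongly_sofic_def, THEN spec[of _ "{e, \<one>}"], THEN mp, OF K]
  then obtain \<Delta> :: nat where H: "\<forall>\<epsilon>::real. \<epsilon> > 0 \<longrightarrow>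
          (\<exists>(D::nat set) (\<sigma>::'a \<Rightarrow> nat \<Rightarrow> nat).
             finite D \<and> D \<noteq> {} \<and>
             (\<forall>m \<in> carrier M. \<sigma> m ` D \<subseteq> D) \<and>
             (\<forall>v \<in> D. \<sigma> \<one> v = v) \<and>
             (\<forall>k1 \<in> {e, \<one>}. \<forall>k2 \<in> {e, \<one>}.
                ham_dist D (\<sigma> (k1 \<otimes> k2)) (\<sigma> k1 \<circ> \<sigma> k2) \<le> \<epsilon>) \<and>
             (\<forall>k1 \<in> {e, \<one>}. \<forall>k2 \<in> {e, \<one>}. k1 \<noteq> k2 \<longrightarrow>
                ham_dist D (\<sigma> k1) (\<sigma> k2) \<ge> 1 - \<epsilon>) \<and>
             (\<forall>k \<in> {e, \<one>}. \<forall>v \<in> D. card {u \<in> D. \<sigma> k u = v} \<le> \<Delta>))"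
    by (elim exE conjE)
  define \<epsilon> :: real where "\<epsilon> = 1 / (2 * (real \<Delta> + 1))"
  have ep: "\<epsilon> > 0" unfolding \<epsilon>_def by simp
  obtain D \<sigma> where D: "finite D" "D \<noteq> {}" and cl: "\<forall>m \<in> carrier M. \<sigma> m ` D \<subseteq> D"
    and id: "\<forall>v \<in> D. \<sigma> \<one> v = v"
    and mult0: "\<forall>k1 \<in> {e, \<one>}. \<forall>k2 \<in> {e, \<one>}.
                ham_dist D (\<sigma> (k1 \<otimes> k2)) (\<sigma> k1 \<circ> \<sigma> k2) \<le> \<epsilon>"
    and sep0: "\<forall>k1 \<in> {e, \<one>}. \<forall>k2 \<in> {e, \<one>}. k1 \<noteq> k2 \<longrightarrow>
                ham_dist D (\<sigma> k1) (\<sigma> k2) \<ge> 1 - \<epsilon>"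
    and fib0: "\<forall>k \<in> {e, \<one>}. \<forall>v \<in> D. card {u \<in> D. \<sigma> k u = v} \<le> \<Delta>"
    using H[rule_format, OF ep] by (elim exE conjE)
  have mult: "ham_dist D (\<sigma> (e \<otimes> e)) (\<sigma> e \<circ> \<sigma> e) \<le> \<epsilon>" using mult0 by blast
  have sep: "ham_dist D (\<sigma> e) (\<sigma> \<one>) \<ge> 1 - \<epsilon>" using sep0 e(3) by blast
  have fib: "\<forall>v \<in> D. card {u \<in> D. \<sigma> e u = v} \<le> \<Delta>" using fib0 by blast
  define f where "f = \<sigma> e"
  have fD: "f ` D \<subseteq> D" using cl e(1) unfolding f_def by blast
  have cD: "real (card D) > 0" using D by (simp add: card_gt_0_iff)
  define A where "A = {v \<in> D. f v = f (f v)}"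
  define B where "B = {v \<in> D. f v \<noteq> f (f v)}"
  define Fx where "Fx = {v \<in> D. f v = v}"
  define NF where "NF = {v \<in> D. f v \<noteq> v}"
  have "real (card B) \<le> \<epsilon> * real (card D)"
    using mult cD unfolding ham_dist_def B_def f_def e(2) by (simp add: divide_le_eq)
  moreover have "card A + card B = card D"
    unfolding A_def B_def using D(1) by (subst card_Un_disjoint[symmetric]) (auto intro: arg_cong[where f=card])
  ultimately have Ab: "real (card A) \<ge> (1 - \<epsilon>) * real (card D)" by (simp add: algebra_simps)
  have "{v \<in> D. \<sigma> e v \<noteq> \<sigma> \<one> v} = NF" unfolding NF_def f_def using id by auto
  then have "real (card NF) \<ge> (1 - \<epsilon>) * real (card D)"
    using sep cD unfolding ham_dist_def by (simp add: le_divide_eq)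
  moreover have "card Fx + card NF = card D"
    unfolding Fx_def NF_def using D(1) by (subst card_Un_disjoint[symmetric]) (auto intro: arg_cong[where f=card])
  ultimately have Fb: "real (card Fx) \<le> \<epsilon> * real (card D)" by (simp add: algebra_simps)
  have "f ` A \<subseteq> Fx" unfolding A_def Fx_def using fD by auto
  then have "card (f ` A) \<le> card Fx" using D(1) unfolding Fx_def by (intro card_mono) auto
  moreover have "card A \<le> \<Delta> * card (f ` A)"
    using fiber_bound[of D A f \<Delta>] D(1) fD fib unfolding A_def f_def by auto
  ultimately have "card A \<le> \<Delta> * card Fx" by (meson le_trans mult_le_mono2)
  then have "real (card A) \<le> real \<Delta> * real (card Fx)" by (metis of_nat_le_iff of_nat_mult)
  also have "\<dots> \<le> real \<Delta> * (\<epsilon> * real (card D))" using Fb by (intro mult_left_mono) auto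
  finally have "(1 - \<epsilon>) * real (card D) \<le> real \<Delta> * \<epsilon> * real (card D)" using Ab by simp
  then have "1 - \<epsilon> \<le> real \<Delta> * \<epsilon>" using cD by simp
  then have "1 \<le> (real \<Delta> + 1) * \<epsilon>" by (simp add: algebra_simps)
  moreover have "(real \<Delta> + 1) * \<epsilon> = 1/2" unfolding \<epsilon>_def by simp
  ultimately show False by simp
qed

theorem corollary3p17:
  fixes M :: "('a, 'b) monoid_scheme"
  assumes "monoid M" and "finite (carrier M)"
  shows "(group M \<longleftrightarrow> strongly_sofic M) \<and>
         (strongly_sofic M \<longleftrightarrow>
            \<not> (\<exists>e \<in> carrier M. e \<otimes>\<^bsub>M\<^esub> e = e \<and> e \<noteq> \<one>\<^bsub>M\<^esub>))"
proof -
  have ab: "group M \<Longrightarrow> strongly_sofic M" using group_sofic assms(2) by blast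
  have bc: "strongly_sofic M \<Longrightarrow> \<not> (\<exists>e \<in> carrier M. e \<otimes>\<^bsub>M\<^esub> e = e \<and> e \<noteq> \<one>\<^bsub>M\<^esub>)"
    using sofic_no_idem assms(1) by blast
  have ca: "\<not> (\<exists>e \<in> carrier M. e \<otimes>\<^bsub>M\<^esub> e = e \<and> e \<noteq> \<one>\<^bsub>M\<^esub>) \<Longrightarrow> group M"
    using monoid.finite_no_idem_group[OF assms(1) assms(2)] by blast
  show ?thesis using ab bc ca by blast
qed

end
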